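(* Let $PV_2=H\otimes\Bbbk[v]\cong\Bbbk[\partial,v]$, with $\lambda$-products defined on $\Bbbk[v]$ by $$(v^m{}_\lambda v^n)=v^{n+m},\qquad [v^m{}_\lambda v^n]=\big(m\partial+(n+m)\lambda\big)v^{n+m-1},\qquad n,m\ge0,$$ extended to $PV_2$ by sesquilinearity. Then $PV_2$ is a Poisson conformal algebra.
   Context: $\Bbbk$ is a field of characteristic $0$, $H=\Bbbk[\partial]$. A $\lambda$-product on an $H$-module $C$ is a $\Bbbk$-bilinear map $(x,y)\mapsto(x_\lambda y)=\sum_{n\ge0}\frac{\lambda^n}{n!}(x_{(n)}y)\in C[\lambda]$ satisfying sesquilinearity $(\partial x_\lambda y)=-\lambda(x_\lambda y)$, $(x_\lambda\partial y)=(\partial+\lambda)(x_\lambda y)$; $(x_{-\partial-\lambda}y)$ means $\sum_n\frac{(-\partial-\lambda)^n}{n!}(x_{(n)}y)$ with $\partial$ acting on coefficients. A Poisson conformal algebra is an $H$-module with two $\lambda$-products such that $(\cdot_\lambda\cdot)$ is associative, $(x_\lambda(y_\mu z))=((x_\lambda y)_{\lambda+\mu}z)$, and commutative, $(x_\lambda y)=(y_{-\partial-\lambda}x)$; $[\cdot_\lambda\cdot]$ satisfies $[x_\lambda y]=-[y_{-\partial-\lambda}x]$ and $[x_\lambda[y_\mu z]]-[y_\mu[x_\lambda z]]=[[x_\lambda y]_{\lambda+\mu}z]$; and $[x_\lambda(y_\mu z)]=([x_\lambda y]_{\lambda+\mu}z)+(y_\mu[x_\lambda z])$ for all $x,y,z$.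 *)

theory Defs
  imports "HOL-Computational_Algebra.Polynomial"
begin

text \<open>An H-module C (H = k[d]) is a type 'c carrying a k-vector
space structure given by the scalar action sc, and the action of d given by D.
Elements of C[lambda] are represented as 'c poly (lambda the variable).
Two-variable polynomials C[lambda,mu] are represented as 'c poly poly,
with outer variable mu and inner variable lambda.
The class comm_ring_1 on 'c is only used so that polynomial arithmetic over 'c
is available; the axioms below never multiply two elements of C.\<close>

definition H_module :: "('c::comm_ring_1 \<Rightarrow> 'c) \<Rightarrow> ('k::field \<Rightarrow> 'c \<Rightarrow> 'c) \<Rightarrow> bool" where
  "H_module D sc \<longleftrightarrow>
     (\<forall>a x y. sc a (x + y) = sc a x + sc a y) \<and>
     (\<forall>a b x. sc (a + b) x = sc a x + sc b x) \<and>
     (\<forall>a b x. sc (a * b) x = sc a (sc b x)) \<and>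
     (\<forall>x. sc 1 x = x) \<and>
     (\<forall>x y. D (x + y) = D x + D y) \<and>
     (\<forall>a x. D (sc a x) = sc a (D x))"

definition lambda_product ::
  "('c::comm_ring_1 \<Rightarrow> 'c) \<Rightarrow> ('k::field \<Rightarrow> 'c \<Rightarrow> 'c) \<Rightarrow> ('c \<Rightarrow> 'c \<Rightarrow> 'c poly) \<Rightarrow> bool" where
  "lambda_product D sc L \<longleftrightarrow>
     (\<forall>x y z. L (x + y) z = L x z + L y z) \<and>
     (\<forall>x y z. L x (y + z) = L x y + L x z) \<and>
     (\<forall>a x y. L (sc a x) y = map_poly (sc a) (L x y)) \<and>
     (\<forall>a x y. L x (sc a y) = map_poly (sc a) (L x y)) \<and>
     (\<forall>x y. L (D x) y = - pCons 0 (L x y)) \<and>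
     (\<forall>x y. L x (D y) = map_poly D (L x y) + pCons 0 (L x y))"

text \<open>(x_{-d-lambda} y): replace lambda^n c by (-d-lambda)^n c, d acting on coefficients.\<close>
definition flip_lam :: "('c::comm_ring_1 \<Rightarrow> 'c) \<Rightarrow> 'c poly \<Rightarrow> 'c poly" where
  "flip_lam D P = (\<Sum>n\<le>degree P. ((\<lambda>Q. - (map_poly D Q + pCons 0 Q)) ^^ n) [:coeff P n:])"

definition lamv :: "'c::comm_ring_1 poly poly" where "lamv = [:[:0, 1:]:]"
definition muv :: "'c::comm_ring_1 poly poly" where "muv = [:0, 1:]"

definition ev2 :: "'c::comm_ring_1 poly \<Rightarrow> 'c poly poly \<Rightarrow> 'c poly poly" where
  "ev2 P t = (\<Sum>k\<le>degree P. t ^ k * [:[:coeff P k:]:])"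

definition sub2 :: "('c::comm_ring_1 \<Rightarrow> 'c poly) \<Rightarrow> 'c poly \<Rightarrow> 'c poly poly \<Rightarrow> 'c poly poly \<Rightarrow> 'c poly poly" where
  "sub2 F P s t = (\<Sum>n\<le>degree P. s ^ n * ev2 (F (coeff P n)) t)"

text \<open>Poisson conformal algebra with commutative associative product L = (._lambda.)
and Lie bracket B = [._lambda.].\<close>
definition poisson_conformal_algebra ::
  "('c::comm_ring_1 \<Rightarrow> 'c) \<Rightarrow> ('k::field \<Rightarrow> 'c \<Rightarrow> 'c) \<Rightarrow> ('c \<Rightarrow> 'c \<Rightarrow> 'c poly) \<Rightarrow> ('c \<Rightarrow> 'c \<Rightarrow> 'c poly) \<Rightarrow> bool" where
  "poisson_conformal_algebra D sc L B \<longleftrightarrow>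
     H_module D sc \<and> lambda_product D sc L \<and> lambda_product D sc B \<and>
     \<comment> \<open>(x_lambda (y_mu z)) = ((x_lambda y)_{lambda+mu} z)\<close>
     (\<forall>x y z. sub2 (L x) (L y z) muv lamv = sub2 (\<lambda>a. L a z) (L x y) lamv (lamv + muv)) \<and>
     \<comment> \<open>(x_lambda y) = (y_{-d-lambda} x)\<close>
     (\<forall>x y. L x y = flip_lam D (L y x)) \<and>
     \<comment> \<open>[x_lambda y] = - [y_{-d-lambda} x]\<close>
     (\<forall>x y. B x y = - flip_lam D (B y x)) \<and>
     \<comment> \<open>[x_lambda [y_mu z]] - [y_mu [x_lambda z]] = [[x_lambda y]_{lambda+mu} z]\<close>
     (\<forall>x y z. sub2 (B x) (B y z) muv lamv - sub2 (B y) (B x z) lamv muv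
              = sub2 (\<lambda>a. B a z) (B x y) lamv (lamv + muv)) \<and>
     \<comment> \<open>[x_lambda (y_mu z)] = ([x_lambda y]_{lambda+mu} z) + (y_mu [x_lambda z])\<close>
     (\<forall>x y z. sub2 (B x) (L y z) muv lamv
              = sub2 (\<lambda>a. L a z) (B x y) lamv (lamv + muv) + sub2 (L y) (B x z) lamv muv)"

text \<open>The concrete algebra PV_2 = k[d,v], represented as 'k poly poly:
outer variable v, coefficients in k[d].\<close>

definition pv_D :: "'k::field poly poly \<Rightarrow> 'k poly poly" where
  "pv_D x = smult [:0, 1:] x"

definition pv_sc :: "'k::field \<Rightarrow> 'k poly poly \<Rightarrow> 'k poly poly" where
  "pv_sc a x = smult [:a:] x"

definition pv_d :: "'k::field poly poly" where "pv_d = [:[:0, 1:]:]"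
definition pv_v :: "'k::field poly poly" where "pv_v = [:0, 1:]"

definition pv_evalH :: "'k::field poly \<Rightarrow> 'k poly poly poly \<Rightarrow> 'k poly poly poly" where
  "pv_evalH p t = poly (map_poly (\<lambda>a. [:[:[:a:]:]:]) p) t"

text \<open>Extension by bilinearity and sesquilinearity:
(p(d) v^m _lambda q(d) v^n) = p(-lambda) q(d+lambda) (v^m _lambda v^n).\<close>
definition pv_assoc :: "'k::field poly poly \<Rightarrow> 'k poly poly \<Rightarrow> 'k poly poly poly" where
  "pv_assoc x y = (\<Sum>m\<le>degree x. \<Sum>n\<le>degree y.
      pv_evalH (coeff x m) (- [:0, 1:]) * pv_evalH (coeff y n) ([:pv_d:] + [:0, 1:])
      * [:pv_v ^ (n + m):])"

definition pv_bracket :: "'k::field poly poly \<Rightarrow> 'k poly poly \<Rightarrow> 'k poly poly poly" where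
  "pv_bracket x y = (\<Sum>m\<le>degree x. \<Sum>n\<le>degree y.
      pv_evalH (coeff x m) (- [:0, 1:]) * pv_evalH (coeff y n) ([:pv_d:] + [:0, 1:])
      * (([:of_nat m * pv_d:] + of_nat (n + m) * [:0, 1:]) * [:pv_v ^ (n + m - 1):]))"

end

theory Submission
  imports Defs
begin

definition rh :: "('a::comm_ring_1 \<Rightarrow> 'b::comm_ring_1) \<Rightarrow> bool" where
 "rh f \<longleftrightarrow> f 0 = 0 \<and> f 1 = 1 \<and> (\<forall>x y. f (x+y) = f x + f y) \<and> (\<forall>x y. f (x*y) = f x * f y)"

lemma rh_0: "rh f \<Longrightarrow> f 0 = 0" and rh_1: "rh f \<Longrightarrow> f 1 = 1"
  and rh_add: "rh f \<Longrightarrow> f (x+y) = f x + f y" and rh_mult: "rh f \<Longrightarrow> f (x*y) = f x * f y"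
  by (auto simp: rh_def)

lemma rh_uminus: assumes h: "rh f" shows "f (-x) = - f x"
proof -
  have "f (x + -x) = 0" using rh_0[OF h] by simp
  then have "f x + f (-x) = 0" using rh_add[OF h, of x "-x"] by simp
  then show ?thesis by (simp add: eq_neg_iff_add_eq_0 add.commute)
qed

lemma rh_diff: "rh f \<Longrightarrow> f (x-y) = f x - f y"
  using rh_add[of f x "-y"] rh_uminus[of f y] by simp

lemma rh_power: assumes h: "rh f" shows "f (x^n) = f x ^ n"
  by (induction n) (simp_all add: rh_1[OF h] rh_mult[OF h])

lemma rh_of_nat: assumes h: "rh f" shows "f (of_nat n) = of_nat n"
  by (induction n) (simp_all add: rh_0[OF h] rh_1[OF h] rh_add[OF h])

lemma rh_sum: assumes h: "rh f" shows "f (sum g A) = (\<Sum>a\<in>A. f (g a))"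
  by (induction A rule: infinite_finite_induct) (simp_all add: rh_0[OF h] rh_add[OF h])

lemma rh_comp: "rh f \<Longrightarrow> rh g \<Longrightarrow> rh (\<lambda>x. f (g x))"
  by (simp add: rh_def)

lemma rh_const: "rh (\<lambda>x. [:x:])"
  by (simp add: rh_def)

lemma rh_poly: "rh (\<lambda>p. poly p x)"
  by (simp add: rh_def)

lemma map_poly_add_rh: assumes h: "rh f" shows "map_poly f (p + q) = map_poly f p + map_poly f q"
  by (intro poly_eqI) (simp add: coeff_map_poly rh_0[OF h] rh_add[OF h])

lemma map_poly_mult_rh: assumes h: "rh f" shows "map_poly f (p * q) = map_poly f p * map_poly f q"
proof (induction p)
  case 0 then show ?case by simp
next
  case (pCons a p)
  have "map_poly f (pCons a p * q) = map_poly f (smult a q + pCons 0 (p * q))" by simp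
  also have "\<dots> = smult (f a) (map_poly f q) + pCons 0 (map_poly f p * map_poly f q)"
    using pCons by (simp add: map_poly_add_rh[OF h] map_poly_smult map_poly_pCons rh_0[OF h] rh_mult[OF h])
  also have "\<dots> = map_poly f (pCons a p) * map_poly f q"
    using pCons by (simp add: map_poly_pCons rh_0[OF h])
  finally show ?case .
qed

lemma rh_map_poly: assumes h: "rh f" shows "rh (map_poly f)"
  unfolding rh_def using h by (simp add: map_poly_add_rh map_poly_mult_rh rh_1)

lemma hom_poly: assumes h: "rh h" shows "h (poly p x) = poly (map_poly h p) (h x)"
  by (induction p) (simp_all add: map_poly_pCons rh_0[OF h] rh_add[OF h] rh_mult[OF h])

definition ev :: "('k \<Rightarrow> 'a::comm_ring_1) \<Rightarrow> 'a \<Rightarrow> 'a \<Rightarrow> 'k::comm_ring_1 poly poly \<Rightarrow> 'a" where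
  "ev e a b r = poly (map_poly (\<lambda>p. poly (map_poly e p) a) r) b"

lemma rh_ev: assumes "rh e" shows "rh (ev e a b)"
proof -
  have 1: "rh (\<lambda>p. poly (map_poly e p) a)"
    using rh_comp[OF rh_poly rh_map_poly[OF assms]] by simp
  show ?thesis unfolding ev_def
    using rh_comp[OF rh_poly rh_map_poly[OF 1]] by simp
qed

lemma ev_comp: assumes h: "rh h" and e: "rh e"
  shows "h (ev e a b r) = ev (\<lambda>c. h (e c)) (h a) (h b) r"
proof -
  have "h (ev e a b r) = poly (map_poly h (map_poly (\<lambda>p. poly (map_poly e p) a) r)) (h b)"
    unfolding ev_def by (rule hom_poly[OF h])
  also have "\<dots> = poly (map_poly (\<lambda>p. h (poly (map_poly e p) a)) r) (h b)"
    by (simp add: map_poly_map_poly rh_0[OF h] rh_0[OF e] o_def)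
  also have "\<dots> = poly (map_poly (\<lambda>p. poly (map_poly (\<lambda>c. h (e c)) p) (h a)) r) (h b)"
    by (simp add: hom_poly[OF h] map_poly_map_poly rh_0[OF h] rh_0[OF e] o_def)
  finally show ?thesis unfolding ev_def .
qed


lemma poly_sum_le: assumes "degree p \<le> N" shows "poly p (x::'a::comm_ring_1) = (\<Sum>i\<le>N. coeff p i * x^i)"
  unfolding poly_altdef by (rule sum.mono_neutral_left) (use assms in \<open>auto simp: coeff_eq_0\<close>)

lemma degree_map_poly_le': "f 0 = 0 \<Longrightarrow> degree (map_poly f p) \<le> degree p"
  by (rule degree_le) (simp add: coeff_map_poly coeff_eq_0)

lemma poly_map_sum: assumes "f 0 = 0" "degree p \<le> N"
  shows "poly (map_poly f p) (x::'a::comm_ring_1) = (\<Sum>i\<le>N. f (coeff p i) * x^i)"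
proof -
  have "degree (map_poly f p) \<le> N" using degree_map_poly_le'[of f p] assms by simp
  then show ?thesis by (simp add: poly_sum_le coeff_map_poly assms(1))
qed

definition e1 :: "'k::comm_ring_1 \<Rightarrow> 'k poly poly poly" where "e1 c = [:[:[:c:]:]:]"
definition e2 :: "'k::comm_ring_1 \<Rightarrow> 'k poly poly poly poly" where "e2 c = [:[:[:[:c:]:]:]:]"
definition d1 :: "'k::field poly poly poly" where "d1 = [:pv_d:]"
definition v1 :: "'k::field poly poly poly" where "v1 = [:pv_v:]"
definition l1 :: "'k::field poly poly poly" where "l1 = [:0,1:]"
definition d2 :: "'k::field poly poly poly poly" where "d2 = [:[:pv_d:]:]"
definition v2 :: "'k::field poly poly poly poly" where "v2 = [:[:pv_v:]:]"
definition A :: "'k::field poly poly \<Rightarrow> 'k poly poly poly" where "A x = ev e1 (-l1) v1 x"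
definition S :: "'k::field poly poly \<Rightarrow> 'k poly poly poly" where "S x = ev e1 (d1+l1) v1 x"

lemma rh_e1: "rh e1"
proof -
  have "rh (\<lambda>c. [:[:[:c:]:]:])" using rh_comp[OF rh_const rh_comp[OF rh_const rh_const]] by simp
  then show ?thesis by (simp add: e1_def[abs_def])
qed

lemma rh_e2: "rh e2"
proof -
  have "rh (\<lambda>c. [:[:[:[:c:]:]:]:])"
    using rh_comp[OF rh_const rh_comp[OF rh_const rh_comp[OF rh_const rh_const]]] by simp
  then show ?thesis by (simp add: e2_def[abs_def])
qed

lemma ev_const: assumes h: "rh e" shows "ev e a b [:[:c:]:] = e c"
  by (simp add: ev_def map_poly_pCons rh_0[OF h])

lemma ev_pvd: assumes h: "rh e" shows "ev e a b pv_d = a"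
  by (simp add: ev_def pv_d_def map_poly_pCons rh_0[OF h] rh_1[OF h])

lemma ev_pvv: assumes h: "rh e" shows "ev e a b pv_v = b"
  by (simp add: ev_def pv_v_def map_poly_pCons rh_0[OF h] rh_1[OF h])

lemma smult_as_mult: "smult c x = [:c:] * x"
  by simp

lemma const_power: "[:a:]^n = [:a^n:]"
  by (induction n) (simp_all add: one_pCons mult.commute)

lemma ev_sum: assumes h: "rh e" and d: "degree r \<le> N"
  shows "ev e a b r = (\<Sum>m\<le>N. poly (map_poly e (coeff r m)) a * b^m)"
  unfolding ev_def using poly_map_sum[of "\<lambda>p. poly (map_poly e p) a" r N b] d by simp

lemma e1_eq: "(\<lambda>a. [:[:[:a:]:]:]) = e1" by (rule ext) (simp add: e1_def)

lemma v1_pow: "[:pv_v^k:] = v1^k"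
  unfolding v1_def const_power ..

lemma assoc_repr: "pv_assoc x y = A x * S y"
proof -
  have "A x * S y = (\<Sum>m\<le>degree x. poly (map_poly e1 (coeff x m)) (-l1) * v1^m) *
                    (\<Sum>n\<le>degree y. poly (map_poly e1 (coeff y n)) (d1+l1) * v1^n)"
    unfolding A_def S_def by (simp only: ev_sum[OF rh_e1 order.refl])
  also have "\<dots> = pv_assoc x y"
    unfolding pv_assoc_def sum_product pv_evalH_def e1_eq v1_pow
    unfolding d1_def[symmetric] l1_def[symmetric] 
    by (intro sum.cong refl) (simp only: power_add mult_ac)
  finally show ?thesis ..
qed


lemma ev_pderiv_sum: assumes h: "rh e"
  shows "ev e a b (pderiv r) = (\<Sum>m\<le>degree r. of_nat m * poly (map_poly e (coeff r m)) a * b^(m-1))"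
proof -
  define H where "H p = poly (map_poly e p) a" for p
  have hH: "rh H" unfolding H_def[abs_def] using rh_comp[OF rh_poly rh_map_poly[OF h]] by simp
  have "ev e a b (pderiv r) = (\<Sum>m\<le>degree r. H (coeff (pderiv r) m) * b^m)"
    unfolding H_def by (rule ev_sum[OF h]) (rule degree_le, simp add: coeff_pderiv coeff_eq_0)
  also have "\<dots> = (\<Sum>m\<le>degree r. of_nat (Suc m) * H (coeff r (Suc m)) * b^m)"
    by (simp add: coeff_pderiv rh_mult[OF hH] rh_of_nat[OF hH] rh_add[OF hH] rh_1[OF hH])
  also have "\<dots> = (\<Sum>m\<le>degree r. of_nat m * H (coeff r m) * b^(m-1))"
  proof (cases "degree r")
    case 0
    then show ?thesis by (simp add: coeff_eq_0 rh_0[OF hH])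
  next
    case (Suc k)
    have "(\<Sum>m\<le>Suc k. of_nat (Suc m) * H (coeff r (Suc m)) * b^m) = (\<Sum>m\<le>k. of_nat (Suc m) * H (coeff r (Suc m)) * b^m)"
      using Suc by (simp add: coeff_eq_0 rh_0[OF hH])
    also have "\<dots> = (\<Sum>m\<le>Suc k. of_nat m * H (coeff r m) * b^(m-1))"
      by (subst sum.atMost_Suc_shift) simp
    finally show ?thesis using Suc by simp
  qed
  finally show ?thesis unfolding H_def .
qed

definition B :: "'k::field poly poly \<Rightarrow> 'k poly poly \<Rightarrow> 'k poly poly poly" where
  "B x y = (d1+l1) * A (pderiv x) * S y + l1 * A x * S (pderiv y)"

lemma term_id: fixes u l w H G :: "'a::comm_ring_1"
  shows "H*G*((of_nat m * u + of_nat (n+m) * l) * w^(n+m-1)) = (u+l)*(of_nat m*H*w^(m-1)*(G*w^n)) + l*(H*w^m*(of_nat n*G*w^(n-1)))"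
proof (cases m)
  case 0 then show ?thesis by (simp add: algebra_simps)
next
  case (Suc m')
  show ?thesis
  proof (cases n)
    case 0 then show ?thesis using Suc by (simp add: algebra_simps)
  next
    case (Suc n')
    have e: "n + m - 1 = m' + n" using Suc \<open>m = Suc m'\<close> by simp
    show ?thesis using Suc \<open>m = Suc m'\<close> unfolding e by (simp add: algebra_simps power_add)
  qed
qed

lemma of_nat_pvd: "[:of_nat m * pv_d:] = of_nat m * d1"
  unfolding d1_def by (simp add: of_nat_poly)

lemma bracket_repr: "pv_bracket x y = B x y"
proof -
  define Hx where "Hx m = poly (map_poly e1 (coeff x m)) (-l1)" for m
  define Gy where "Gy n = poly (map_poly e1 (coeff y n)) (d1+l1)" for n
  have 1: "(d1+l1) * A (pderiv x) * S y = (\<Sum>m\<le>degree x. \<Sum>n\<le>degree y. (d1+l1) * (of_nat m * Hx m * v1^(m-1) * (Gy n * v1^n)))"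
    unfolding A_def S_def Hx_def Gy_def
    by (simp only: ev_pderiv_sum[OF rh_e1], simp only: ev_sum[OF rh_e1 order.refl], simp only: mult.assoc,
        simp only: sum_product, simp only: sum_distrib_left, simp only: mult.assoc)
  have 2: "l1 * A x * S (pderiv y) = (\<Sum>m\<le>degree x. \<Sum>n\<le>degree y. l1 * (Hx m * v1^m * (of_nat n * Gy n * v1^(n-1))))"
    unfolding A_def S_def Hx_def Gy_def
    by (simp only: ev_pderiv_sum[OF rh_e1], simp only: ev_sum[OF rh_e1 order.refl], simp only: mult.assoc,
        simp only: sum_product, simp only: sum_distrib_left, simp only: mult.assoc)
  have "pv_bracket x y = (\<Sum>m\<le>degree x. \<Sum>n\<le>degree y. (d1+l1) * (of_nat m * Hx m * v1^(m-1) * (Gy n * v1^n)) + l1 * (Hx m * v1^m * (of_nat n * Gy n * v1^(n-1))))"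
    unfolding pv_bracket_def pv_evalH_def e1_eq v1_pow of_nat_pvd
    unfolding d1_def[symmetric] l1_def[symmetric] Hx_def[symmetric] Gy_def[symmetric]
    by (intro sum.cong refl) (rule term_id)
  also have "\<dots> = B x y" unfolding B_def 1 2 by (simp only: sum.distrib)
  finally show ?thesis .
qed


lemma ev_comp': assumes "rh h" "rh e" "\<And>c. h (e c) = e' c"
  shows "h (ev e a b r) = ev e' (h a) (h b) r"
  using ev_comp[OF assms(1,2)] assms(3) by simp

lemma rh_ev1: "rh (ev e1 a b)" by (rule rh_ev[OF rh_e1])
lemma rh_ev2: "rh (ev e2 a b)" by (rule rh_ev[OF rh_e2])

lemma pv_sc_mult: "pv_sc a x = [:[:a:]:] * x" by (simp add: pv_sc_def)
lemma pv_D_mult: "pv_D x = pv_d * x" by (simp add: pv_D_def pv_d_def)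

lemma A_add: "A (x + y) = A x + A y" unfolding A_def by (rule rh_add[OF rh_ev1])
lemma S_add: "S (x + y) = S x + S y" unfolding S_def by (rule rh_add[OF rh_ev1])
lemma A_0: "A 0 = 0" unfolding A_def by (rule rh_0[OF rh_ev1])
lemma S_0: "S 0 = 0" unfolding S_def by (rule rh_0[OF rh_ev1])
lemma A_sc: "A (pv_sc a x) = e1 a * A x"
  unfolding A_def pv_sc_mult rh_mult[OF rh_ev1] ev_const[OF rh_e1] ..
lemma S_sc: "S (pv_sc a x) = e1 a * S x"
  unfolding S_def pv_sc_mult rh_mult[OF rh_ev1] ev_const[OF rh_e1] ..
lemma A_D: "A (pv_D x) = - l1 * A x"
  unfolding A_def pv_D_mult rh_mult[OF rh_ev1] ev_pvd[OF rh_e1] ..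
lemma S_D: "S (pv_D x) = (d1 + l1) * S x"
  unfolding S_def pv_D_mult rh_mult[OF rh_ev1] ev_pvd[OF rh_e1] ..
lemma pderiv_sc: "pderiv (pv_sc a x) = pv_sc a (pderiv x)"
  unfolding pv_sc_def by (rule pderiv_smult)
lemma pderiv_D: "pderiv (pv_D x) = pv_D (pderiv x)"
  unfolding pv_D_def by (rule pderiv_smult)

lemma map_sc: "map_poly (pv_sc a) P = e1 a * P"
  by (intro poly_eqI) (simp add: coeff_map_poly pv_sc_def e1_def)
lemma map_D: "map_poly pv_D P = d1 * P"
  by (intro poly_eqI) (simp add: coeff_map_poly pv_D_def d1_def pv_d_def)
lemma pCons0: "pCons 0 P = l1 * P"
  by (simp add: l1_def)

lemma H_mod: "H_module (pv_D :: 'k::field poly poly \<Rightarrow> _) pv_sc"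
proof -
  have 1: "smult [:a+b:] x = smult [:a:] x + smult [:b:] x" for a b :: 'k and x :: "'k poly poly"
    by (simp add: smult_add_left[symmetric])
  have 2: "smult [:a*b:] x = smult [:a:] (smult [:b:] x)" for a b :: 'k and x :: "'k poly poly"
    by (simp add: mult.commute)
  have 3: "smult [:1:] x = x" for x :: "'k poly poly"
    by (simp add: one_pCons[symmetric])
  have 4: "smult [:0, 1:] (smult [:a:] x) = smult [:a:] (smult [:0, 1:] x)" for a :: 'k and x :: "'k poly poly"
    by (simp add: mult.commute)
  show ?thesis unfolding H_module_def pv_D_def pv_sc_def
    using 1 2 3 4 by (simp add: smult_add_right)
qed

lemma lp_assoc: "lambda_product (pv_D :: 'k::field poly poly \<Rightarrow> _) pv_sc pv_assoc"
  unfolding lambda_product_def assoc_repr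
  by (simp add: A_add S_add A_sc S_sc A_D S_D map_sc map_D pCons0 algebra_simps)

lemma lp_bracket: "lambda_product (pv_D :: 'k::field poly poly \<Rightarrow> _) pv_sc pv_bracket"
  unfolding lambda_product_def bracket_repr B_def
  by (simp add: A_add S_add A_sc S_sc A_D S_D map_sc map_D pCons0 pderiv_add pderiv_sc pderiv_D algebra_simps)


definition Fl :: "'k::field poly poly poly \<Rightarrow> 'k poly poly poly" where
  "Fl P = poly (map_poly (\<lambda>r. [:r:]) P) (-(d1+l1))"

lemma rh_Fl: "rh Fl"
  using rh_comp[OF rh_poly rh_map_poly[OF rh_const]] unfolding Fl_def[abs_def] by simp

lemma flip_iter: "((\<lambda>Q. - (map_poly pv_D Q + pCons 0 Q)) ^^ n) Q = (-(d1+l1))^n * (Q :: 'k::field poly poly poly)"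
  by (induction n) (simp_all add: map_D pCons0 algebra_simps)

lemma flip_Fl: "flip_lam pv_D P = Fl P"
  unfolding flip_lam_def flip_iter Fl_def
  by (subst poly_map_sum[OF _ order.refl]) (simp_all add: mult.commute)

lemma Fl_e1: "Fl (e1 c) = e1 c" by (simp add: Fl_def e1_def map_poly_pCons)
lemma Fl_l1: "Fl l1 = -(d1+l1)" by (simp add: Fl_def l1_def map_poly_pCons)
lemma Fl_d1: "Fl d1 = d1" by (simp add: Fl_def d1_def map_poly_pCons)
lemma Fl_v1: "Fl v1 = v1" by (simp add: Fl_def v1_def map_poly_pCons)

lemma Fl_A: "Fl (A x) = S x"
  unfolding A_def S_def ev_comp'[OF rh_Fl rh_e1 Fl_e1]
  by (simp only: rh_uminus[OF rh_Fl] Fl_l1 Fl_v1 minus_minus)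

lemma Fl_S: "Fl (S x) = A x"
  unfolding A_def S_def ev_comp'[OF rh_Fl rh_e1 Fl_e1]
  by (simp add: rh_add[OF rh_Fl] Fl_l1 Fl_v1 Fl_d1)

lemma Fl_dl: "Fl (d1 + l1) = - l1"
  by (simp add: rh_add[OF rh_Fl] Fl_l1 Fl_d1)

lemma comm_assoc: "pv_assoc x y = flip_lam pv_D (pv_assoc y x)"
  unfolding flip_Fl assoc_repr rh_mult[OF rh_Fl] Fl_A Fl_S by (simp add: mult.commute)

lemma skew_bracket: "pv_bracket x y = - flip_lam pv_D (pv_bracket y x)"
  unfolding flip_Fl bracket_repr B_def rh_mult[OF rh_Fl] rh_add[OF rh_Fl] Fl_A Fl_S Fl_dl Fl_l1
  by (simp add: algebra_simps Fl_d1)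


lemma ev2_poly: "ev2 P t = poly (map_poly (\<lambda>c. [:[:c:]:]) P) t"
  unfolding ev2_def by (subst poly_map_sum[OF _ order.refl]) (simp_all add: mult.commute)

lemma rh_E2: "rh (\<lambda>P. ev2 P t)"
  unfolding ev2_poly using rh_comp[OF rh_poly[of t] rh_map_poly[OF rh_comp[OF rh_const rh_const]]] by simp

lemma E2_e1: "ev2 (e1 c) t = e2 c" by (simp add: ev2_poly e1_def e2_def map_poly_pCons)
lemma E2_l1: "ev2 l1 t = t" by (simp add: ev2_poly l1_def map_poly_pCons one_pCons[symmetric])
lemma E2_d1: "ev2 d1 t = d2" by (simp add: ev2_poly d1_def d2_def map_poly_pCons)
lemma E2_v1: "ev2 v1 t = v2" by (simp add: ev2_poly v1_def v2_def map_poly_pCons)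

lemma E2_A: "ev2 (A x) t = ev e2 (-t) v2 x"
  unfolding A_def ev_comp'[OF rh_E2 rh_e1 E2_e1]
  by (simp only: rh_uminus[OF rh_E2] E2_l1 E2_v1)

lemma E2_S: "ev2 (S x) t = ev e2 (d2 + t) v2 x"
  unfolding S_def ev_comp'[OF rh_E2 rh_e1 E2_e1]
  by (simp only: rh_add[OF rh_E2] E2_l1 E2_v1 E2_d1)

lemma sub2_poly: assumes "F 0 = 0" shows "sub2 F P s t = poly (map_poly (\<lambda>c. ev2 (F c) t) P) s"
  unfolding sub2_def
  by (subst poly_map_sum[OF _ order.refl]) (simp_all add: mult.commute assms rh_0[OF rh_E2])

lemma lin2: fixes s K1 K2 :: "'a::comm_ring_1" assumes "f 0 = 0" "g 0 = 0"
  shows "poly (map_poly (\<lambda>c. K1 * f c + K2 * g c) P) s = K1 * poly (map_poly f P) s + K2 * poly (map_poly g P) s"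
proof -
  have "poly (map_poly (\<lambda>c. K1 * f c + K2 * g c) P) s = (\<Sum>i\<le>degree P. (K1 * f (coeff P i) + K2 * g (coeff P i)) * s^i)"
    by (rule poly_map_sum) (simp_all add: assms)
  also have "\<dots> = K1 * (\<Sum>i\<le>degree P. f (coeff P i) * s^i) + K2 * (\<Sum>i\<le>degree P. g (coeff P i) * s^i)"
    by (simp add: sum_distrib_left sum.distrib algebra_simps)
  also have "\<dots> = K1 * poly (map_poly f P) s + K2 * poly (map_poly g P) s"
    by (simp add: poly_map_sum[of f, OF assms(1) order.refl] poly_map_sum[of g, OF assms(2) order.refl])
  finally show ?thesis .
qed

lemma lin1: fixes s K :: "'a::comm_ring_1" assumes "f 0 = 0"
  shows "poly (map_poly (\<lambda>c. K * f c) P) s = K * poly (map_poly f P) s"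
  using lin2[of f f K 0 P s] assms by simp

definition Phi :: "('k::field poly poly \<Rightarrow> 'k poly poly poly poly) \<Rightarrow> 'k poly poly poly poly \<Rightarrow> 'k poly poly poly \<Rightarrow> 'k poly poly poly poly"
  where "Phi h s P = poly (map_poly h P) s"

lemma rh_Phi: "rh (Phi (ev e2 \<alpha> v2) s)"
  unfolding Phi_def[abs_def] using rh_comp[OF rh_poly[of s] rh_map_poly[OF rh_ev2]] by simp

lemma Phi_e1: "Phi (ev e2 \<alpha> v2) s (e1 c) = e2 c"
  by (simp add: Phi_def e1_def map_poly_pCons rh_0[OF rh_ev2] ev_const[OF rh_e2])
lemma Phi_l1: "Phi (ev e2 \<alpha> v2) s l1 = s"
  by (simp add: Phi_def l1_def map_poly_pCons rh_0[OF rh_ev2] rh_1[OF rh_ev2])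
lemma Phi_d1: "Phi (ev e2 \<alpha> v2) s d1 = \<alpha>"
  by (simp add: Phi_def d1_def map_poly_pCons rh_0[OF rh_ev2] ev_pvd[OF rh_e2])
lemma Phi_v1: "Phi (ev e2 \<alpha> v2) s v1 = v2"
  by (simp add: Phi_def v1_def map_poly_pCons rh_0[OF rh_ev2] ev_pvv[OF rh_e2])

lemma Phi_A: "Phi (ev e2 \<alpha> v2) s (A r) = ev e2 (-s) v2 r"
  unfolding A_def ev_comp'[OF rh_Phi rh_e1 Phi_e1]
  by (simp only: rh_uminus[OF rh_Phi] Phi_l1 Phi_v1)

lemma Phi_S: "Phi (ev e2 \<alpha> v2) s (S r) = ev e2 (\<alpha> + s) v2 r"
  unfolding S_def ev_comp'[OF rh_Phi rh_e1 Phi_e1]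
  by (simp only: rh_add[OF rh_Phi] Phi_l1 Phi_v1 Phi_d1)


lemma ev_pCons: assumes "rh e" shows "ev e a b (pCons p r) = poly (map_poly e p) a + b * ev e a b r"
  unfolding ev_def by (simp add: map_poly_pCons rh_0[OF assms])

lemma chain:
  assumes Fh: "rh Fh" and e: "rh e"
  and dadd: "\<And>x y. \<delta> (x+y) = \<delta> x + \<delta> y" and dmult: "\<And>x y. \<delta> (x*y) = \<delta> x * Fh y + Fh x * \<delta> y"
  and de: "\<And>c. \<delta> (e c) = 0" and da: "\<delta> a = 0" and db: "\<delta> b = 1"
  shows "\<delta> (ev e a b r) = ev (\<lambda>c. Fh (e c)) (Fh a) (Fh b) (pderiv r)"
proof -
  have d0: "\<delta> 0 = 0" using dadd[of 0 0] by simp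
  have inner: "\<delta> (poly (map_poly e p) a) = 0" for p
    by (induction p) (simp_all add: map_poly_pCons rh_0[OF e] dadd dmult de da d0)
  have e': "rh (\<lambda>c. Fh (e c))" by (rule rh_comp[OF Fh e])
  show ?thesis
  proof (induction r)
    case 0 show ?case by (simp add: ev_def d0 rh_0[OF rh_ev[OF e']])
  next
    case (pCons p r)
    have "\<delta> (ev e a b (pCons p r)) = Fh (ev e a b r) + Fh b * \<delta> (ev e a b r)"
      unfolding ev_pCons[OF e] by (simp add: dadd dmult inner db)
    also have "\<dots> = ev (\<lambda>c. Fh (e c)) (Fh a) (Fh b) (pderiv (pCons p r))"
      unfolding pCons.IH ev_comp[OF Fh e] pderiv_pCons rh_add[OF rh_ev[OF e']]
      by (simp add: ev_pCons[OF e'] rh_0[OF e'])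
    finally show ?case .
  qed
qed

lemma map_pderiv_add: "map_poly pderiv (P + Q) = map_poly pderiv P + map_poly pderiv Q"
  by (intro poly_eqI) (simp add: coeff_map_poly pderiv_add)

lemma map_pderiv_smult: "map_poly pderiv (smult a Q) = smult (pderiv a) Q + smult a (map_poly pderiv Q)"
  by (intro poly_eqI) (simp add: coeff_map_poly pderiv_mult algebra_simps)

lemma map_pderiv_mult: "map_poly pderiv (P * Q) = map_poly pderiv P * Q + P * map_poly pderiv (Q :: 'k::field poly poly poly)"
proof (induction P)
  case 0 then show ?case by simp
next
  case (pCons a P)
  have "map_poly pderiv (pCons a P * Q) = map_poly pderiv (smult a Q + pCons 0 (P * Q))" by simp
  also have "\<dots> = smult (pderiv a) Q + smult a (map_poly pderiv Q) + pCons 0 (map_poly pderiv P * Q + P * map_poly pderiv Q)"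
    unfolding map_pderiv_add map_pderiv_smult pCons.IH[symmetric] by (simp add: map_poly_pCons)
  also have "\<dots> = map_poly pderiv (pCons a P) * Q + pCons a P * map_poly pderiv Q"
    by (simp add: map_poly_pCons algebra_simps)
  finally show ?case .
qed

definition Psi :: "'k::field poly poly poly poly \<Rightarrow> 'k poly poly poly poly \<Rightarrow> 'k poly poly poly \<Rightarrow> 'k poly poly poly poly"
  where "Psi \<alpha> s P = poly (map_poly (\<lambda>c. ev e2 \<alpha> v2 (pderiv c)) P) s"

lemma Psi_eq: "Psi \<alpha> s P = Phi (ev e2 \<alpha> v2) s (map_poly pderiv P)"
  unfolding Psi_def Phi_def by (simp add: map_poly_map_poly rh_0[OF rh_ev2] o_def)

lemma Psi_add: "Psi \<alpha> s (P + Q) = Psi \<alpha> s P + Psi \<alpha> s Q"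
  unfolding Psi_eq map_pderiv_add rh_add[OF rh_Phi] ..

lemma Psi_mult: "Psi \<alpha> s (P * Q) = Psi \<alpha> s P * Phi (ev e2 \<alpha> v2) s Q + Phi (ev e2 \<alpha> v2) s P * Psi \<alpha> s Q"
  unfolding Psi_eq map_pderiv_mult rh_add[OF rh_Phi] rh_mult[OF rh_Phi] ..

lemma Psi_e1: "Psi \<alpha> s (e1 c) = 0"
  by (simp add: Psi_def e1_def map_poly_pCons pderiv_pCons rh_0[OF rh_ev2])
lemma Psi_l1: "Psi \<alpha> s l1 = 0"
  by (simp add: Psi_def l1_def map_poly_pCons pderiv_pCons rh_0[OF rh_ev2])
lemma Psi_d1: "Psi \<alpha> s d1 = 0"
  by (simp add: Psi_def d1_def pv_d_def map_poly_pCons pderiv_pCons rh_0[OF rh_ev2])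
lemma Psi_v1: "Psi \<alpha> s v1 = 1"
  by (simp add: Psi_def v1_def pv_v_def map_poly_pCons pderiv_pCons rh_0[OF rh_ev2] rh_1[OF rh_ev2] one_pCons[symmetric])
lemma Psi_0: "Psi \<alpha> s 0 = 0"
  by (simp add: Psi_def)
lemma Psi_uminus: "Psi \<alpha> s (- P) = - Psi \<alpha> s P"
  using Psi_add[of \<alpha> s P "-P"] Psi_0[of \<alpha> s] by (simp add: eq_neg_iff_add_eq_0 add.commute)

lemma Psi_A: "Psi \<alpha> s (A r) = ev e2 (-s) v2 (pderiv r)"
  unfolding A_def
  by (subst chain[OF rh_Phi rh_e1 Psi_add Psi_mult Psi_e1])
     (simp_all add: Psi_uminus Psi_l1 Psi_v1 Phi_e1 rh_uminus[OF rh_Phi] Phi_l1 Phi_v1)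

lemma Psi_S: "Psi \<alpha> s (S r) = ev e2 (\<alpha> + s) v2 (pderiv r)"
  unfolding S_def
  by (subst chain[OF rh_Phi rh_e1 Psi_add Psi_mult Psi_e1])
     (simp_all add: Psi_add Psi_l1 Psi_d1 Psi_v1 Phi_e1 rh_add[OF rh_Phi] Phi_l1 Phi_v1 Phi_d1)


lemma assoc_x0: "pv_assoc x 0 = 0" by (simp add: assoc_repr S_0)
lemma assoc_0z: "pv_assoc 0 z = 0" by (simp add: assoc_repr A_0)
lemma br_x0: "pv_bracket x 0 = 0" by (simp add: bracket_repr B_def S_0)
lemma br_0z: "pv_bracket 0 z = 0" by (simp add: bracket_repr B_def A_0)

lemma sub2_assoc_x: "sub2 (pv_assoc x) P s t = ev e2 (-t) v2 x * Phi (ev e2 (d2+t) v2) s P"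
  unfolding sub2_poly[of "pv_assoc x", OF assoc_x0] assoc_repr rh_mult[OF rh_E2] E2_A E2_S Phi_def
  by (rule lin1) (simp add: rh_0[OF rh_ev2])

lemma sub2_assoc_z: "sub2 (\<lambda>a. pv_assoc a z) P s t = ev e2 (d2+t) v2 z * Phi (ev e2 (-t) v2) s P"
proof -
  have 1: "ev2 (pv_assoc a z) t = ev e2 (d2+t) v2 z * ev e2 (-t) v2 a" for a
    unfolding assoc_repr rh_mult[OF rh_E2] E2_A E2_S by (simp add: mult.commute)
  show ?thesis
    unfolding sub2_poly[of "\<lambda>a. pv_assoc a z", OF assoc_0z] 1 Phi_def
    by (rule lin1) (simp add: rh_0[OF rh_ev2])
qed

lemma sub2_br_x: "sub2 (pv_bracket x) P s t = (d2+t) * ev e2 (-t) v2 (pderiv x) * Phi (ev e2 (d2+t) v2) s P + t * ev e2 (-t) v2 x * Psi (d2+t) s P"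
  unfolding sub2_poly[of "pv_bracket x", OF br_x0] bracket_repr B_def rh_mult[OF rh_E2] rh_add[OF rh_E2] E2_A E2_S E2_l1 E2_d1 Phi_def Psi_def
  by (rule lin2) (simp_all add: rh_0[OF rh_ev2])

lemma sub2_br_z: "sub2 (\<lambda>a. pv_bracket a z) P s t = (d2+t) * ev e2 (d2+t) v2 z * Psi (-t) s P + t * ev e2 (d2+t) v2 (pderiv z) * Phi (ev e2 (-t) v2) s P"
proof -
  have 1: "ev2 (pv_bracket a z) t = ((d2+t) * ev e2 (d2+t) v2 z) * ev e2 (-t) v2 (pderiv a) + (t * ev e2 (d2+t) v2 (pderiv z)) * ev e2 (-t) v2 a" for a
    unfolding bracket_repr B_def rh_mult[OF rh_E2] rh_add[OF rh_E2] E2_A E2_S E2_l1 E2_d1 by (simp add: mult_ac)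
  show ?thesis
    unfolding sub2_poly[of "\<lambda>a. pv_bracket a z", OF br_0z] 1 Phi_def Psi_def
    by (rule lin2) (simp_all add: rh_0[OF rh_ev2])
qed

lemma n1: "-(lamv+muv)+lamv = (-muv :: 'a::comm_ring_1 poly poly)" by simp
lemma n2: "d2 + (lamv+muv) = d2+lamv+muv" by (simp add: add.assoc)
lemma n3: "d2 + muv + lamv = d2+lamv+muv" by (simp add: add_ac)

lemma assoc_ax: "sub2 (pv_assoc x) (pv_assoc y z) muv lamv = sub2 (\<lambda>a. pv_assoc a z) (pv_assoc x y) lamv (lamv + muv)"
  unfolding sub2_assoc_x sub2_assoc_z
  unfolding assoc_repr rh_mult[OF rh_Phi] Phi_A Phi_S n1 n2 n3
  by (simp add: mult_ac)

lemma leibniz: "sub2 (pv_bracket x) (pv_assoc y z) muv lamv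
              = sub2 (\<lambda>a. pv_assoc a z) (pv_bracket x y) lamv (lamv + muv) + sub2 (pv_assoc y) (pv_bracket x z) lamv muv"
  unfolding sub2_br_x sub2_assoc_x sub2_assoc_z
  unfolding assoc_repr bracket_repr B_def
  unfolding rh_add[OF rh_Phi] rh_mult[OF rh_Phi] Psi_add Psi_mult Phi_A Phi_S Psi_A Psi_S Phi_l1 Phi_d1 Psi_l1 Psi_d1
  unfolding n1 n2 n3
  by algebra

lemma jacobi: "sub2 (pv_bracket x) (pv_bracket y z) muv lamv - sub2 (pv_bracket y) (pv_bracket x z) lamv muv
              = sub2 (\<lambda>a. pv_bracket a z) (pv_bracket x y) lamv (lamv + muv)"
  unfolding sub2_br_x sub2_br_z
  unfolding bracket_repr B_def
  unfolding rh_add[OF rh_Phi] rh_mult[OF rh_Phi] Psi_add Psi_mult Phi_A Phi_S Psi_A Psi_S Phi_l1 Phi_d1 Psi_l1 Psi_d1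
  unfolding n1 n2 n3
  by algebra

theorem mainTheorem7:
  shows "poisson_conformal_algebra (pv_D :: 'k::field_char_0 poly poly \<Rightarrow> _) pv_sc pv_assoc pv_bracket"
  unfolding poisson_conformal_algebra_def
  using H_mod lp_assoc lp_bracket comm_assoc skew_bracket assoc_ax leibniz jacobi by blast

end
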